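(* Let $n\ge 2$, $T=n$, $I=J=\{1,\dots,n\}$, and $E=\{(i,1):i\in I\}\cup\{(j,j):j=2,\dots,n\}$. Then the clairvoyant optimum of IFM on this instance is at least $1-1/e$, while under RANKING the offline agent $1$ satisfies $\mathbb E[Z_1]=O(1/n)$. Hence RANKING has competitive ratio $0$ for IFM.
   Context: Model. An instance consists of a finite bipartite graph $(I,J,E)$, where $I$ is the set of offline agents and $J$ the set of online agent types, with $|J|=T$. For $j\in J$ let $\mathcal N_j=\{i\in I:(i,j)\in E\}$. There are $T$ rounds $t=1,\dots,T$; in each round exactly one online agent arrives, whose type is drawn uniformly at random from $J$ (each type with probability $1/T$), independently across rounds. Each offline agent can be matched at most once. When an online agent of type $j$ arrives, an online algorithm must immediately and irrevocably either reject it or match it to a currently unmatched $i\in\mathcal N_j$. Let $Z_i$ be the indicator that offline agent $i$ is matched by the end. IFM maximizes $\min_{i\in I}\mathbb E[Z_i]$. A clairvoyant policy observes the entire arrival sequence before choosing (possibly randomly) which arrivals to match to which compatible unmatched offline agents; the clairvoyant optimum is the supremum of $\min_i\mathbb E[Z_i]$ over clairvoyant policies. RANKING: before the online phase draw a uniformly random permutation $\pi$ of $I$; when an online agent of type $j$ arrives, match it to the currently unmatched neighbor of $j$ that comes earliest in $\pi$, or reject if none exists. *)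

theory Defs
  imports "HOL-Probability.Probability"
begin

text \<open>An IFM instance: offline agents I, online types J, edges E \<subseteq> I \<times> J
 (pairs (i,j)), T rounds indexed 0..<T. An arrival sequence is a function
 s with s t \<in> J for t < T (extensional outside), drawn uniformly, i.e.
 i.i.d. uniform types.\<close>

definition arrivals :: "nat set \<Rightarrow> nat \<Rightarrow> (nat \<Rightarrow> nat) pmf" where
  "arrivals J T = pmf_of_set (PiE {..<T} (\<lambda>_. J))"

definition valid_matching ::
  "nat set \<Rightarrow> (nat \<times> nat) set \<Rightarrow> nat \<Rightarrow> (nat \<Rightarrow> nat) \<Rightarrow> (nat \<Rightarrow> nat option) \<Rightarrow> bool" where
  "valid_matching I E T s m \<longleftrightarrow>
     (\<forall>t. T \<le> t \<longrightarrow> m t = None) \<and>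
     (\<forall>t<T. \<forall>i. m t = Some i \<longrightarrow> i \<in> I \<and> (i, s t) \<in> E) \<and>
     (\<forall>t1 t2 i. m t1 = Some i \<and> m t2 = Some i \<longrightarrow> t1 = t2)"

definition clairvoyant_policy ::
  "nat set \<Rightarrow> nat set \<Rightarrow> (nat \<times> nat) set \<Rightarrow> nat \<Rightarrow>
   ((nat \<Rightarrow> nat) \<Rightarrow> (nat \<Rightarrow> nat option) pmf) \<Rightarrow> bool" where
  "clairvoyant_policy I J E T P \<longleftrightarrow>
     (\<forall>s \<in> PiE {..<T} (\<lambda>_. J). set_pmf (P s) \<subseteq> {m. valid_matching I E T s m})"

definition clair_match_prob ::
  "nat set \<Rightarrow> nat \<Rightarrow> ((nat \<Rightarrow> nat) \<Rightarrow> (nat \<Rightarrow> nat option) pmf) \<Rightarrow> nat \<Rightarrow> real" where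
  "clair_match_prob J T P i =
     measure_pmf.prob (bind_pmf (arrivals J T) P) {m. \<exists>t<T. m t = Some i}"

definition clair_opt :: "nat set \<Rightarrow> nat set \<Rightarrow> (nat \<times> nat) set \<Rightarrow> nat \<Rightarrow> real" where
  "clair_opt I J E T =
     (SUP P \<in> {P. clairvoyant_policy I J E T P}. Min ((clair_match_prob J T P) ` I))"

text \<open>RANKING. A random permutation \<pi> of I; agent i comes before i' iff
 \<pi> i < \<pi> i'. The run returns the set of matched offline agents after t rounds.\<close>

definition ranking_step ::
  "nat set \<Rightarrow> (nat \<times> nat) set \<Rightarrow> (nat \<Rightarrow> nat) \<Rightarrow> nat \<Rightarrow> nat set \<Rightarrow> nat set" where
  "ranking_step I E \<pi> j M =
     (let C = {i \<in> I. (i, j) \<in> E \<and> i \<notin> M}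
      in if C = {} then M else insert (arg_min \<pi> (\<lambda>i. i \<in> C)) M)"

primrec ranking_run ::
  "nat set \<Rightarrow> (nat \<times> nat) set \<Rightarrow> (nat \<Rightarrow> nat) \<Rightarrow> (nat \<Rightarrow> nat) \<Rightarrow> nat \<Rightarrow> nat set" where
  "ranking_run I E \<pi> s 0 = {}"
| "ranking_run I E \<pi> s (Suc t) = ranking_step I E \<pi> (s t) (ranking_run I E \<pi> s t)"

definition ranking_match_prob ::
  "nat set \<Rightarrow> nat set \<Rightarrow> (nat \<times> nat) set \<Rightarrow> nat \<Rightarrow> nat \<Rightarrow> real" where
  "ranking_match_prob I J E T i =
     measure_pmf.prob (pair_pmf (pmf_of_set {\<pi>. \<pi> permutes I}) (arrivals J T))
       {(\<pi>, s). i \<in> ranking_run I E \<pi> s T}"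

definition hard_edges :: "nat \<Rightarrow> (nat \<times> nat) set" where
  "hard_edges n = {(i, 1) | i. i \<in> {1..n}} \<union> {(j, j) | j. j \<in> {2..n}}"

end

theory Submission
  imports Defs
begin


definition rk :: "nat set \<Rightarrow> (nat \<Rightarrow> nat) \<Rightarrow> nat \<Rightarrow> nat" where
  "rk G \<pi> g = card {j\<in>G. \<pi> j \<le> \<pi> g}"

lemma rank_few:
  assumes "finite G"
  shows "card {g\<in>G. rk G \<pi> g \<le> k} \<le> k"
proof (cases "{g\<in>G. rk G \<pi> g \<le> k} = {}")
  case True then show ?thesis by (simp only: True) simp
next
  case False
  define H where "H = {g\<in>G. rk G \<pi> g \<le> k}"
  have fH: "finite H" using assms H_def by auto
  have ne: "\<pi> ` H \<noteq> {}" using False H_def by auto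
  have "Max (\<pi> ` H) \<in> \<pi> ` H" using Max_in[OF finite_imageI[OF fH] ne] .
  then obtain h where hH: "h \<in> H" and hm: "\<pi> h = Max (\<pi> ` H)" by auto
  have "\<forall>y\<in>H. \<pi> y \<le> \<pi> h" using hm fH by auto
  then have "H \<subseteq> {j\<in>G. \<pi> j \<le> \<pi> h}" using H_def by auto
  then have "card H \<le> rk G \<pi> h" unfolding rk_def using assms by (intro card_mono) auto
  also have "\<dots> \<le> k" using hH H_def by auto
  finally show ?thesis using H_def by simp
qed

lemma rank_swap:
  assumes "g0 \<in> G" "g \<in> G"
  shows "rk G (\<pi> \<circ> Transposition.transpose g0 g) g0 = rk G \<pi> g"
proof -
  let ?t = "Transposition.transpose g0 g"
  have "{j\<in>G. (\<pi> \<circ> ?t) j \<le> (\<pi> \<circ> ?t) g0} = ?t ` {j\<in>G. \<pi> j \<le> \<pi> g}"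
  proof safe
    fix j assume j: "j \<in> G" "(\<pi> \<circ> ?t) j \<le> (\<pi> \<circ> ?t) g0"
    show "j \<in> ?t ` {j \<in> G. \<pi> j \<le> \<pi> g}"
      apply (rule image_eqI[of _ _ "?t j"])
      using j assms by (auto simp: Transposition.transpose_def split: if_splits)
  next
    fix j assume "j \<in> G" "\<pi> j \<le> \<pi> g"
    then show "?t j \<in> G" "(\<pi> \<circ> ?t) (?t j) \<le> (\<pi> \<circ> ?t) g0"
      using assms by (auto simp: Transposition.transpose_def)
  qed
  then show ?thesis unfolding rk_def
    by (simp add: card_image inj_on_transpose)
qed

lemma perm_count:
  assumes fI: "finite I" and GI: "G \<subseteq> I" and g0: "g0 \<in> G"
  shows "card G * card {\<pi>. \<pi> permutes I \<and> rk G \<pi> g0 \<le> k} \<le> card {\<pi>. \<pi> permutes I} * k"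
proof -
  let ?P = "{\<pi>. \<pi> permutes I}"
  have fP: "finite ?P" using finite_permutations[OF fI] .
  have fG: "finite G" using GI fI finite_subset by blast
  have eq: "card {\<pi>. \<pi> permutes I \<and> rk G \<pi> g0 \<le> k} = card {\<pi>\<in>?P. rk G \<pi> g \<le> k}"
    if g: "g \<in> G" for g
  proof -
    let ?t = "Transposition.transpose g0 g"
    have tp: "?t permutes I" using g g0 GI by (intro permutes_swap_id) auto
    have "bij_betw (\<lambda>\<pi>. \<pi> \<circ> ?t) {\<pi>\<in>?P. rk G \<pi> g \<le> k} {\<pi>. \<pi> permutes I \<and> rk G \<pi> g0 \<le> k}"
    proof (rule bij_betw_byWitness[where f' = "\<lambda>\<pi>. \<pi> \<circ> ?t"])
      show "\<forall>a\<in>{\<pi> \<in> ?P. rk G \<pi> g \<le> k}. a \<circ> ?t \<circ> ?t = a"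
        by (simp add: comp_assoc)
      show "\<forall>a\<in>{\<pi>. \<pi> permutes I \<and> rk G \<pi> g0 \<le> k}. a \<circ> ?t \<circ> ?t = a"
        by (simp add: comp_assoc)
      show "(\<lambda>\<pi>. \<pi> \<circ> ?t) ` {\<pi> \<in> ?P. rk G \<pi> g \<le> k} \<subseteq> {\<pi>. \<pi> permutes I \<and> rk G \<pi> g0 \<le> k}"
        using rank_swap[OF g0 g] tp by (auto intro: permutes_compose)
      show "(\<lambda>\<pi>. \<pi> \<circ> ?t) ` {\<pi>. \<pi> permutes I \<and> rk G \<pi> g0 \<le> k} \<subseteq> {\<pi> \<in> ?P. rk G \<pi> g \<le> k}"
      proof safe
        fix \<pi> assume p: "\<pi> permutes I" "rk G \<pi> g0 \<le> k"
        show "\<pi> \<circ> ?t permutes I" using p tp by (auto intro: permutes_compose)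
        have "rk G (\<pi> \<circ> ?t) g = rk G (\<pi> \<circ> ?t \<circ> ?t) g0"
          using rank_swap[OF g0 g, of "\<pi> \<circ> ?t"] by simp
        then show "rk G (\<pi> \<circ> ?t) g \<le> k" using p by (simp add: comp_assoc)
      qed
    qed
    then show ?thesis by (simp add: bij_betw_same_card)
  qed
  have s1: "(\<Sum>g\<in>G. card {\<pi>\<in>?P. rk G \<pi> g \<le> k}) = (\<Sum>g\<in>G. card {\<pi>. \<pi> permutes I \<and> rk G \<pi> g0 \<le> k})"
    by (rule sum.cong) (use eq in auto)
  have "card G * card {\<pi>. \<pi> permutes I \<and> rk G \<pi> g0 \<le> k}
      = (\<Sum>g\<in>G. card {\<pi>\<in>?P. rk G \<pi> g \<le> k})" unfolding s1 by simp
  also have "\<dots> = (\<Sum>g\<in>G. \<Sum>\<pi>\<in>?P. if rk G \<pi> g \<le> k then 1 else 0)"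
    using fP by (simp add: sum.If_cases Int_def)
  also have "\<dots> = (\<Sum>\<pi>\<in>?P. \<Sum>g\<in>G. if rk G \<pi> g \<le> k then 1 else 0)"
    by (rule sum.swap)
  also have "\<dots> = (\<Sum>\<pi>\<in>?P. card {g\<in>G. rk G \<pi> g \<le> k})"
    using fG by (simp add: sum.If_cases Int_def)
  also have "\<dots> \<le> (\<Sum>\<pi>\<in>?P. k)" using rank_few[OF fG] by (intro sum_mono) auto
  also have "\<dots> = card ?P * k" by simp
  finally show ?thesis .
qed

lemma step_cases:
  fixes \<pi> :: "nat \<Rightarrow> nat"
  assumes fI: "finite I"
  shows "ranking_step I E \<pi> j M = M \<or>
    (\<exists>x. x \<in> I \<and> (x, j) \<in> E \<and> x \<notin> M \<and> ranking_step I E \<pi> j M = insert x M \<and>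
        (\<forall>y\<in>I. (y, j) \<in> E \<and> y \<notin> M \<longrightarrow> \<pi> x \<le> \<pi> y))"
proof (cases "{i \<in> I. (i, j) \<in> E \<and> i \<notin> M} = {}")
  case True then show ?thesis by (simp add: ranking_step_def Let_def)
next
  case False
  then obtain k where k: "k \<in> {i \<in> I. (i, j) \<in> E \<and> i \<notin> M}" by blast
  let ?x = "arg_min \<pi> (\<lambda>i. i \<in> {i \<in> I. (i, j) \<in> E \<and> i \<notin> M})"
  have "?x \<in> {i \<in> I. (i, j) \<in> E \<and> i \<notin> M} \<and> (\<forall>y. y \<in> {i \<in> I. (i, j) \<in> E \<and> i \<notin> M} \<longrightarrow> \<pi> ?x \<le> \<pi> y)"
    by (rule arg_min_nat_lemma[of "\<lambda>i. i \<in> {i \<in> I. (i, j) \<in> E \<and> i \<notin> M}", OF k])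
  then show ?thesis using False by (auto simp add: ranking_step_def Let_def)
qed

definition Dm :: "nat \<Rightarrow> (nat \<Rightarrow> nat) \<Rightarrow> nat set" where
  "Dm n s = {j\<in>{2..n}. \<forall>t<n. s t \<noteq> j}"

definition Kc :: "nat \<Rightarrow> (nat \<Rightarrow> nat) \<Rightarrow> nat" where
  "Kc n s = card {t. t < n \<and> s t = 1}"

lemma hard_edges_iff: "(i, j) \<in> hard_edges n \<longleftrightarrow> (j = 1 \<and> i \<in> {1..n}) \<or> (i = j \<and> j \<in> {2..n})"
  unfolding hard_edges_def by auto

lemma run_inv:
  assumes s: "s \<in> PiE {..<n} (\<lambda>_. {1..n})" and tn: "t \<le> n"
  shows "ranking_run {1..n} (hard_edges n) \<pi> s t \<subseteq> {1..n} \<and>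
    card (ranking_run {1..n} (hard_edges n) \<pi> s t \<inter> insert 1 (Dm n s)) \<le> card {t'. t' < t \<and> s t' = 1} \<and>
    (1 \<in> ranking_run {1..n} (hard_edges n) \<pi> s t \<longrightarrow>
       (\<forall>j\<in>{1..n}. \<pi> j < \<pi> 1 \<longrightarrow> j \<in> ranking_run {1..n} (hard_edges n) \<pi> s t))"
  using tn
proof (induction t)
  case 0 then show ?case by simp
next
  case (Suc t)
  let ?G = "insert 1 (Dm n s)"
  define M where "M = ranking_run {1..n} (hard_edges n) \<pi> s t"
  have IH: "M \<subseteq> {1..n}" "card (M \<inter> ?G) \<le> card {t'. t' < t \<and> s t' = 1}"
     "1 \<in> M \<longrightarrow> (\<forall>j\<in>{1..n}. \<pi> j < \<pi> 1 \<longrightarrow> j \<in> M)"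
    using Suc M_def by auto
  have tl: "t < n" using Suc by simp
  have sj: "s t \<in> {1..n}" using PiE_mem[OF s, of t] tl by simp
  have fin: "finite (M \<inter> ?G)" using IH(1) by (meson finite_Int finite_atLeastAtMost finite_subset)
  have cnt_mono: "card {t'. t' < t \<and> s t' = 1} \<le> card {t'. t' < Suc t \<and> s t' = 1}"
    by (rule card_mono) auto
  have runS: "ranking_run {1..n} (hard_edges n) \<pi> s (Suc t) = ranking_step {1..n} (hard_edges n) \<pi> (s t) M"
    by (simp add: M_def)
  have sc: "ranking_step {1..n} (hard_edges n) \<pi> (s t) M = M \<or>
    (\<exists>x. x \<in> {1..n} \<and> (x, s t) \<in> hard_edges n \<and> x \<notin> M \<and> ranking_step {1..n} (hard_edges n) \<pi> (s t) M = insert x M \<and>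
        (\<forall>y\<in>{1..n}. (y, s t) \<in> hard_edges n \<and> y \<notin> M \<longrightarrow> \<pi> x \<le> \<pi> y))"
    by (rule step_cases) simp
  then show ?case
  proof
    assume eq: "ranking_step {1..n} (hard_edges n) \<pi> (s t) M = M"
    show ?case unfolding runS eq using IH cnt_mono by linarith
  next
    assume "\<exists>x. x \<in> {1..n} \<and> (x, s t) \<in> hard_edges n \<and> x \<notin> M \<and> ranking_step {1..n} (hard_edges n) \<pi> (s t) M = insert x M \<and>
        (\<forall>y\<in>{1..n}. (y, s t) \<in> hard_edges n \<and> y \<notin> M \<longrightarrow> \<pi> x \<le> \<pi> y)"
    then obtain x where x: "x \<in> {1..n}" "(x, s t) \<in> hard_edges n" "x \<notin> M"
      and eq: "ranking_step {1..n} (hard_edges n) \<pi> (s t) M = insert x M"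
      and mn: "\<forall>y\<in>{1..n}. (y, s t) \<in> hard_edges n \<and> y \<notin> M \<longrightarrow> \<pi> x \<le> \<pi> y" by blast
    have c1: "insert x M \<subseteq> {1..n}" using IH x by auto
    have c2: "card (insert x M \<inter> ?G) \<le> card {t'. t' < Suc t \<and> s t' = 1}"
    proof (cases "s t = 1")
      case True
      have "{t'. t' < Suc t \<and> s t' = 1} = insert t {t'. t' < t \<and> s t' = 1}" using True by auto
      then have "card {t'. t' < Suc t \<and> s t' = 1} = Suc (card {t'. t' < t \<and> s t' = 1})" by simp
      moreover have "card (insert x M \<inter> ?G) \<le> Suc (card (M \<inter> ?G))"
      proof -
        have "insert x M \<inter> ?G \<subseteq> insert x (M \<inter> ?G)" by auto
        then have "card (insert x M \<inter> ?G) \<le> card (insert x (M \<inter> ?G))"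
          using fin by (intro card_mono) auto
        also have "\<dots> \<le> Suc (card (M \<inter> ?G))" using fin by (simp add: card_insert_if)
        finally show ?thesis .
      qed
      ultimately show ?thesis using IH by linarith
    next
      case False
      then have "x = s t" using x(2) by (auto simp: hard_edges_iff)
      moreover have "s t \<notin> ?G" using False tl unfolding Dm_def by auto
      ultimately have "insert x M \<inter> ?G = M \<inter> ?G" by auto
      then show ?thesis using IH cnt_mono by simp
    qed
    have c3: "1 \<in> insert x M \<longrightarrow> (\<forall>j\<in>{1..n}. \<pi> j < \<pi> 1 \<longrightarrow> j \<in> insert x M)"
    proof (intro impI ballI)
      fix j assume h: "1 \<in> insert x M" "j \<in> {1..n}" "\<pi> j < \<pi> 1"
      show "j \<in> insert x M"
      proof (cases "1 \<in> M")
        case True then show ?thesis using IH h by auto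
      next
        case False
        then have x1: "x = 1" using h by auto
        then have "s t = 1" using x(2) by (auto simp: hard_edges_iff)
        show ?thesis
        proof (rule ccontr)
          assume "j \<notin> insert x M"
          then have "(j, s t) \<in> hard_edges n \<and> j \<notin> M" using \<open>s t = 1\<close> h(2) by (auto simp: hard_edges_iff)
          then have "\<pi> x \<le> \<pi> j" using mn h(2) by auto
          then show False using h(3) x1 by simp
        qed
      qed
    qed
    show ?case unfolding runS eq using c1 c2 c3 by blast
  qed
qed

lemma matched_rank:
  assumes s: "s \<in> PiE {..<n} (\<lambda>_. {1..n})" and p: "\<pi> permutes {1..n}"
    and m: "1 \<in> ranking_run {1..n} (hard_edges n) \<pi> s n"
  shows "rk (insert 1 (Dm n s)) \<pi> 1 \<le> Kc n s"
proof -
  let ?M = "ranking_run {1..n} (hard_edges n) \<pi> s n"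
  let ?G = "insert 1 (Dm n s)"
  have inv: "?M \<subseteq> {1..n}" "card (?M \<inter> ?G) \<le> Kc n s"
      "\<forall>j\<in>{1..n}. \<pi> j < \<pi> 1 \<longrightarrow> j \<in> ?M"
    using run_inv[OF s le_refl, of \<pi>] m unfolding Kc_def by auto
  have inj: "inj \<pi>" using p by (rule permutes_inj)
  have GI: "?G \<subseteq> {1..n}" unfolding Dm_def using inv(1) m by auto
  have "{j\<in>?G. \<pi> j \<le> \<pi> 1} \<subseteq> ?M \<inter> ?G"
  proof (intro subsetI IntI)
    fix j assume "j \<in> {j\<in>?G. \<pi> j \<le> \<pi> 1}"
    then have j: "j \<in> ?G" "\<pi> j \<le> \<pi> 1" by auto
    then show "j \<in> ?G" by simp
    show "j \<in> ?M"
    proof (cases "j = 1")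
      case True then show ?thesis using m by simp
    next
      case False
      then have "\<pi> j \<noteq> \<pi> 1" using inj by (auto dest: injD)
      then show ?thesis using inv(3) j GI by auto
    qed
  qed
  then have "rk ?G \<pi> 1 \<le> card (?M \<inter> ?G)" unfolding rk_def
    by (intro card_mono) (use inv(1) in \<open>auto intro: finite_subset\<close>)
  then show ?thesis using inv(2) by simp
qed



lemma upd_mem:
  assumes "s \<in> PiE {..<n} (\<lambda>_. A)" "t < n" "v \<in> A"
  shows "s(t:=v) \<in> PiE {..<n} (\<lambda>_. A)"
proof -
  have "s(t:=v) \<in> PiE (insert t {..<n}) (\<lambda>_. A)" by (rule PiE_fun_upd) (use assms in auto)
  then show ?thesis using assms(2) by (simp add: insert_absorb)
qed

lemma Dm_fin: "finite (Dm n s)" unfolding Dm_def by simp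

lemma per_s:
  assumes s: "s \<in> PiE {..<n} (\<lambda>_. {1..n})" and n: "1 \<le> n"
  shows "card {\<pi>. \<pi> permutes {1..n} \<and> 1 \<in> ranking_run {1..n} (hard_edges n) \<pi> s n} * (card (Dm n s) + 1)
     \<le> card {\<pi>. \<pi> permutes {1..n}} * Kc n s"
proof -
  let ?G = "insert 1 (Dm n s)"
  have GI: "?G \<subseteq> {1..n}" using n unfolding Dm_def by auto
  have cG: "card ?G = card (Dm n s) + 1" using Dm_fin[of n s] by (simp add: Dm_def)
  have "card {\<pi>. \<pi> permutes {1..n} \<and> 1 \<in> ranking_run {1..n} (hard_edges n) \<pi> s n}
      \<le> card {\<pi>. \<pi> permutes {1..n} \<and> rk ?G \<pi> 1 \<le> Kc n s}"
    by (rule card_mono) (use finite_permutations[of "{1..n}"] matched_rank[OF s] in \<open>auto intro: finite_subset\<close>)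
  then have "card {\<pi>. \<pi> permutes {1..n} \<and> 1 \<in> ranking_run {1..n} (hard_edges n) \<pi> s n} * card ?G
     \<le> card ?G * card {\<pi>. \<pi> permutes {1..n} \<and> rk ?G \<pi> 1 \<le> Kc n s}" by simp
  also have "\<dots> \<le> card {\<pi>. \<pi> permutes {1..n}} * Kc n s"
    by (rule perm_count) (use GI in auto)
  finally show ?thesis using cG by simp
qed

definition Fv :: "nat \<Rightarrow> (nat \<Rightarrow> nat) \<Rightarrow> real" where
  "Fv n s = 1 / (real (card (Dm n s)) + 1)"

lemma Dm_upd_mono:
  assumes "t < n"
  shows "Dm n s \<subseteq> Dm n (s(t:=1))"
  using assms unfolding Dm_def by auto

lemma Fv_upd: assumes "t < n" shows "Fv n (s(t:=1)) \<le> Fv n s"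
proof -
  have "card (Dm n s) \<le> card (Dm n (s(t:=1)))"
    by (rule card_mono[OF Dm_fin Dm_upd_mono[OF assms]])
  then show ?thesis unfolding Fv_def by (simp add: frac_le)
qed

lemma sym_bound:
  assumes t: "t < n"
  shows "real n * (\<Sum>s\<in>{s\<in>PiE {..<n} (\<lambda>_. {1..n}). s t = 1}. Fv n s) \<le> (\<Sum>s\<in>PiE {..<n} (\<lambda>_. {1..n}). Fv n s)"
proof -
  let ?S = "PiE {..<n} (\<lambda>_. {1..n})"
  have fS: "finite ?S" by (simp add: finite_PiE)
  have each: "(\<Sum>s\<in>{s\<in>?S. s t = 1}. Fv n s) \<le> (\<Sum>s\<in>{s\<in>?S. s t = j}. Fv n s)"
    if j: "j \<in> {1..n}" for j
  proof -
    have "(\<Sum>s\<in>{s\<in>?S. s t = 1}. Fv n s) = (\<Sum>s\<in>{s\<in>?S. s t = j}. Fv n (s(t:=1)))"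
    proof (rule sum.reindex_bij_witness[where i = "\<lambda>s. s(t:=1)" and j = "\<lambda>s. s(t:=j)"])
      fix a assume a: "a \<in> {s\<in>?S. s t = 1}"
      then have a1: "a \<in> ?S" "a t = 1" by auto
      then show "a(t := j, t := 1) = a" by (metis fun_upd_triv fun_upd_upd)
      show "a(t:=j) \<in> {s\<in>?S. s t = j}" using upd_mem[OF a1(1) t j] by simp
      show "Fv n (a(t := j, t := 1)) = Fv n a" using a1 by (metis fun_upd_triv fun_upd_upd)
    next
      fix b assume b: "b \<in> {s\<in>?S. s t = j}"
      then have b1: "b \<in> ?S" "b t = j" by auto
      then show "b(t := 1, t := j) = b" by (metis fun_upd_triv fun_upd_upd)
      have "(1::nat) \<in> {1..n}" using j by simp
      from upd_mem[OF b1(1) t this] show "b(t:=1) \<in> {s\<in>?S. s t = 1}" by simp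
    qed
    also have "\<dots> \<le> (\<Sum>s\<in>{s\<in>?S. s t = j}. Fv n s)"
      by (rule sum_mono) (rule Fv_upd[OF t])
    finally show ?thesis .
  qed
  have "(\<Sum>s\<in>?S. Fv n s) = (\<Sum>s\<in>?S. \<Sum>j\<in>{1..n}. if s t = j then Fv n s else 0)"
  proof (rule sum.cong[OF refl])
    fix s assume "s \<in> ?S"
    then have "s t \<in> {1..n}" using t by (auto simp: PiE_iff)
    then show "Fv n s = (\<Sum>j\<in>{1..n}. if s t = j then Fv n s else 0)"
      by (simp add: sum.delta)
  qed
  also have "\<dots> = (\<Sum>j\<in>{1..n}. \<Sum>s\<in>?S. if s t = j then Fv n s else 0)" by (rule sum.swap)
  also have "\<dots> = (\<Sum>j\<in>{1..n}. \<Sum>s\<in>{s\<in>?S. s t = j}. Fv n s)"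
    using fS by (simp add: sum.If_cases Int_def)
  also have "\<dots> \<ge> (\<Sum>j\<in>{1..n}. \<Sum>s\<in>{s\<in>?S. s t = 1}. Fv n s)"
    by (rule sum_mono) (rule each)
  finally show ?thesis by simp
qed

lemma Kc_sum:
  assumes n: "1 \<le> n"
  shows "(\<Sum>s\<in>PiE {..<n} (\<lambda>_. {1..n}). real (Kc n s) * Fv n s) \<le> (\<Sum>s\<in>PiE {..<n} (\<lambda>_. {1..n}). Fv n s)"
proof -
  let ?S = "PiE {..<n} (\<lambda>_. {1..n})"
  have fS: "finite ?S" by (simp add: finite_PiE)
  have K: "real (Kc n s) = (\<Sum>t<n. if s t = 1 then 1 else 0)" for s
    unfolding Kc_def by (simp add: sum.If_cases Int_def)
  have "(\<Sum>s\<in>?S. real (Kc n s) * Fv n s) = (\<Sum>s\<in>?S. \<Sum>t<n. if s t = 1 then Fv n s else 0)"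
    unfolding K sum_distrib_right by (intro sum.cong refl) simp
  also have "\<dots> = (\<Sum>t<n. \<Sum>s\<in>?S. if s t = 1 then Fv n s else 0)" by (rule sum.swap)
  also have "\<dots> = (\<Sum>t<n. \<Sum>s\<in>{s\<in>?S. s t = 1}. Fv n s)"
    using fS by (simp add: sum.If_cases Int_def)
  also have "\<dots> \<le> (\<Sum>t<n. (\<Sum>s\<in>?S. Fv n s) / real n)"
  proof (rule sum_mono)
    fix t assume "t \<in> {..<n}"
    then have "real n * (\<Sum>s\<in>{s\<in>?S. s t = 1}. Fv n s) \<le> (\<Sum>s\<in>?S. Fv n s)" using sym_bound by simp
    then show "(\<Sum>s\<in>{s\<in>?S. s t = 1}. Fv n s) \<le> (\<Sum>s\<in>?S. Fv n s) / real n"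
      using n by (simp add: field_simps)
  qed
  also have "\<dots> = (\<Sum>s\<in>?S. Fv n s)" using n by simp
  finally show ?thesis .
qed



lemma pointwise_bd:
  fixes X \<mu> :: real
  assumes mu: "\<mu> > 0" and X: "X \<ge> 0"
  shows "1 / (X + 1) \<le> 2 / \<mu> + 4 * (X - \<mu>)^2 / \<mu>^2"
proof (cases "X \<ge> \<mu> / 2")
  case True
  have "1 / (X + 1) \<le> 2 / \<mu>" using True mu X by (simp add: field_simps)
  moreover have "0 \<le> 4 * (X - \<mu>)^2 / \<mu>^2" by simp
  ultimately show ?thesis by linarith
next
  case False
  then have "\<mu> - X \<ge> \<mu> / 2" by simp
  then have "(\<mu> / 2)^2 \<le> (\<mu> - X)^2" using mu by (intro power_mono) auto
  then have "\<mu>^2 \<le> 4 * (X - \<mu>)^2" by (simp add: power2_eq_square algebra_simps)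
  then have "1 \<le> 4 * (X - \<mu>)^2 / \<mu>^2" using mu by (simp add: field_simps)
  moreover have "1 / (X + 1) \<le> 1" using X by simp
  moreover have "0 \<le> 2 / \<mu>" using mu by simp
  ultimately show ?thesis by linarith
qed

lemma avoid_card:
  assumes B: "B \<subseteq> {1..n}"
  shows "card {s\<in>PiE {..<n} (\<lambda>_. {1..n}). \<forall>t<n. s t \<notin> B} = (n - card B)^n"
proof -
  have "{s\<in>PiE {..<n} (\<lambda>_. {1..n}). \<forall>t<n. s t \<notin> B} = PiE {..<n} (\<lambda>_. {1..n} - B)"
    by (rule set_eqI) (simp add: PiE_iff, blast)
  moreover have "card ({1..n} - B) = n - card B"
    using card_Diff_subset[OF finite_subset[OF B] B] by simp
  then have "card (PiE {..<n} (\<lambda>_. {1..n} - B)) = (n - card B)^n"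
    by (simp add: card_PiE)
  ultimately show ?thesis by simp
qed

lemma sum_ind_card:
  assumes "finite S"
  shows "(\<Sum>s\<in>S. if P s then 1 else 0 :: real) = real (card {s\<in>S. P s})"
  using assms by (simp add: sum.If_cases Int_def)

definition ind :: "nat \<Rightarrow> (nat \<Rightarrow> nat) \<Rightarrow> nat \<Rightarrow> real" where
  "ind n s j = (if \<forall>t<n. s t \<noteq> j then 1 else 0)"

lemma X_eq: "real (card (Dm n s)) = (\<Sum>j\<in>{2..n}. ind n s j)"
  unfolding ind_def Dm_def by (subst sum_ind_card) auto

lemma moments:
  assumes n: "2 \<le> n"
  defines "S \<equiv> PiE {..<n} (\<lambda>_. {1..n})"
  shows "(\<Sum>s\<in>S. real (card (Dm n s))) = real (n - 1) * real ((n-1)^n)"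
    and "(\<Sum>s\<in>S. real (card (Dm n s))^2) \<le> real (n - 1) * (real ((n-1)^n) + real (n - 1) * real ((n-2)^n))"
proof -
  have fS: "finite S" unfolding S_def by (simp add: finite_PiE)
  have cJ: "card {2..n} = n - 1" by simp
  have c1: "(\<Sum>s\<in>S. ind n s j) = real ((n-1)^n)" if j: "j \<in> {2..n}" for j
  proof -
    have "(\<Sum>s\<in>S. ind n s j) = real (card {s\<in>S. \<forall>t<n. s t \<notin> {j}})"
      unfolding ind_def by (subst sum_ind_card[OF fS]) simp
    also have "card {s\<in>S. \<forall>t<n. s t \<notin> {j}} = (n-1)^n" unfolding S_def using j avoid_card[of "{j}" n] by simp
    finally show ?thesis by simp
  qed
  have "(\<Sum>s\<in>S. real (card (Dm n s))) = (\<Sum>j\<in>{2..n}. \<Sum>s\<in>S. ind n s j)"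
    unfolding X_eq by (rule sum.swap)
  also have "\<dots> = (\<Sum>j\<in>{2..n}. real ((n-1)^n))" by (rule sum.cong) (use c1 in auto)
  also have "\<dots> = real (n - 1) * real ((n-1)^n)" by (simp only: sum_constant cJ)
  finally show "(\<Sum>s\<in>S. real (card (Dm n s))) = real (n - 1) * real ((n-1)^n)" .
  have c2: "(\<Sum>s\<in>S. ind n s j * ind n s k) = real ((n - card {j,k})^n)"
    if j: "j \<in> {2..n}" and k: "k \<in> {2..n}" for j k
  proof -
    have "(\<Sum>s\<in>S. ind n s j * ind n s k) = (\<Sum>s\<in>S. if \<forall>t<n. s t \<notin> {j,k} then 1 else 0)"
      unfolding ind_def by (rule sum.cong) auto
    also have "\<dots> = real (card {s\<in>S. \<forall>t<n. s t \<notin> {j,k}})" by (rule sum_ind_card[OF fS])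
    also have "card {s\<in>S. \<forall>t<n. s t \<notin> {j,k}} = (n - card {j,k})^n" unfolding S_def using j k avoid_card[of "{j,k}" n] by simp
    finally show ?thesis by simp
  qed
  have c3: "(\<Sum>k\<in>{2..n}. real ((n - card {j,k})^n)) \<le> real ((n-1)^n) + real (n - 1) * real ((n-2)^n)"
    if j: "j \<in> {2..n}" for j
  proof -
    have "(\<Sum>k\<in>{2..n}. real ((n - card {j,k})^n)) = real ((n - card {j,j})^n) + (\<Sum>k\<in>{2..n} - {j}. real ((n - card {j,k})^n))"
      using j by (subst sum.remove[of _ j]) auto
    also have "\<dots> = real ((n-1)^n) + (\<Sum>k\<in>{2..n} - {j}. real ((n-2)^n))"
      by (intro arg_cong2[where f="(+)"] sum.cong) auto
    also have "\<dots> = real ((n-1)^n) + real (n - 2) * real ((n-2)^n)"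
      using j by (simp only: sum_constant card_Diff_singleton cJ) simp
    also have "\<dots> \<le> real ((n-1)^n) + real (n - 1) * real ((n-2)^n)"
      by (intro add_left_mono mult_right_mono) auto
    finally show ?thesis .
  qed
  have "(\<Sum>s\<in>S. real (card (Dm n s))^2) = (\<Sum>s\<in>S. \<Sum>j\<in>{2..n}. \<Sum>k\<in>{2..n}. ind n s j * ind n s k)"
    unfolding X_eq power2_eq_square sum_product by simp
  also have "\<dots> = (\<Sum>j\<in>{2..n}. \<Sum>k\<in>{2..n}. \<Sum>s\<in>S. ind n s j * ind n s k)"
    by (simp add: sum.swap[of _ S] sum.swap[of _ S "{2..n}"])
  also have "\<dots> = (\<Sum>j\<in>{2..n}. \<Sum>k\<in>{2..n}. real ((n - card {j,k})^n))"
    by (intro sum.cong refl) (use c2 in auto)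
  also have "\<dots> \<le> (\<Sum>j\<in>{2..n}. real ((n-1)^n) + real (n - 1) * real ((n-2)^n))"
    by (rule sum_mono) (rule c3)
  also have "\<dots> = real (n - 1) * (real ((n-1)^n) + real (n - 1) * real ((n-2)^n))" by (simp only: sum_constant cJ)
  finally show "(\<Sum>s\<in>S. real (card (Dm n s))^2) \<le> real (n - 1) * (real ((n-1)^n) + real (n - 1) * real ((n-2)^n))" .
qed



lemma pow_ratio_lower:
  assumes n: "2 \<le> n"
  shows "exp (-2) \<le> (1 - 1 / real n) ^ n"
proof -
  have x: "0 \<le> 1 / real n" "1 / real n \<le> 1/2" using n by (auto simp: field_simps)
  have l: "- (1/real n) - 2 * (1/real n)^2 \<le> ln (1 - 1/real n)"
    by (rule ln_one_minus_pos_lower_bound[OF x])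
  have "2 * (1/real n)^2 \<le> 1 / real n" using n by (simp add: field_simps power2_eq_square)
  then have "- 2 / real n \<le> ln (1 - 1/real n)" using l by simp
  then have "real n * (- 2 / real n) \<le> real n * ln (1 - 1/real n)"
    by (intro mult_left_mono) auto
  then have "-2 \<le> real n * ln (1 - 1/real n)" using n by simp
  moreover have pos: "0 < 1 - 1 / real n" using n by (simp add: field_simps)
  have "(1 - 1 / real n) ^ n = exp (real n * ln (1 - 1/real n))"
    using pos by (simp add: exp_of_nat_mult)
  ultimately show ?thesis by simp
qed

lemma pow_ratio_upper:
  assumes n: "1 \<le> n"
  shows "(1 - 1 / real n) ^ n \<le> exp (-1)"
proof -
  have "1 - 1 / real n \<le> exp (- (1 / real n))" using exp_ge_add_one_self[of "- (1 / real n)"] by simp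
  then have "(1 - 1 / real n) ^ n \<le> exp (- (1 / real n)) ^ n"
    using n by (intro power_mono) (auto simp: field_simps)
  also have "\<dots> = exp (real n * (- (1 / real n)))" by (rule exp_of_nat_mult[symmetric])
  also have "\<dots> = exp (-1)" using n by simp
  finally show ?thesis .
qed

lemma A_ratio:
  assumes n: "1 \<le> n"
  shows "real ((n-1)^n) / real (n^n) = (1 - 1 / real n) ^ n"
proof -
  have "real ((n-1)^n) / real (n^n) = (real (n-1) / real n) ^ n" by (simp add: power_divide)
  also have "real (n-1) / real n = 1 - 1 / real n" using n by (simp add: field_simps of_nat_diff)
  finally show ?thesis .
qed

lemma A2_le: assumes n: "2 \<le> n"
  shows "real ((n-2)^n) * real (n^n) \<le> real ((n-1)^n) ^ 2"
proof -
  have "(n-2)*n \<le> (n-1)*(n-1)"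
  proof -
    obtain k where k: "n = k + 2" using n by (metis add.commute le_iff_add)
    show ?thesis unfolding k by (simp add: algebra_simps)
  qed
  then have "((n-2)*n)^n \<le> ((n-1)*(n-1))^n" by (rule power_mono) simp
  then have "real (((n-2)*n)^n) \<le> real (((n-1)*(n-1))^n)" by (simp only: of_nat_le_iff)
  then show ?thesis by (simp add: power_mult_distrib power2_eq_square)
qed

lemma F_sum_bound:
  assumes n: "2 \<le> n"
  shows "(\<Sum>s\<in>PiE {..<n} (\<lambda>_. {1..n}). Fv n s) \<le> real (n^n) * (12 * exp 2) / real n"
proof -
  define S where "S = PiE {..<n} (\<lambda>_. {1..n})"
  have fS: "finite S" unfolding S_def by (simp add: finite_PiE)
  have cS: "card S = n^n" unfolding S_def by (simp add: card_PiE)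
  define N where "N = real (n^n)"
  define A1 where "A1 = real ((n-1)^n)"
  define A2 where "A2 = real ((n-2)^n)"
  define m where "m = real (n - 1)"
  define \<mu> where "\<mu> = m * A1 / N"
  define X where "X s = real (card (Dm n s))" for s
  have Npos: "N > 0" unfolding N_def using n by simp
  have A1pos: "A1 > 0" unfolding A1_def using n by simp
  have mge: "m \<ge> 1" unfolding m_def using n by simp
  have mupos: "\<mu> > 0" unfolding \<mu>_def using Npos A1pos mge by simp
  have muN: "\<mu> * N = m * A1" unfolding \<mu>_def using Npos by simp
  have SX: "(\<Sum>s\<in>S. X s) = m * A1" using moments(1)[OF n] unfolding S_def X_def m_def A1_def by simp
  have SX2: "(\<Sum>s\<in>S. (X s)^2) \<le> m * (A1 + m * A2)"
    using moments(2)[OF n] unfolding S_def X_def m_def A1_def A2_def by simp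
  have A2N: "A2 * N \<le> A1^2" unfolding A2_def N_def A1_def by (rule A2_le[OF n])
  have "(\<Sum>s\<in>S. (X s - \<mu>)^2) = (\<Sum>s\<in>S. (X s)^2 - 2 * \<mu> * X s + \<mu>^2)"
    by (rule sum.cong) (auto simp: power2_eq_square algebra_simps)
  also have "\<dots> = (\<Sum>s\<in>S. (X s)^2) - 2 * \<mu> * (\<Sum>s\<in>S. X s) + N * \<mu>^2"
    by (simp add: sum.distrib sum_subtractf sum_distrib_left cS N_def)
  also have "\<dots> \<le> m * (A1 + m * A2) - 2 * \<mu> * (m * A1) + N * \<mu>^2"
    using SX2 SX by simp
  also have "\<dots> = m * A1 + m^2 * A2 - N * \<mu>^2"
    using muN by (simp add: power2_eq_square algebra_simps)
  also have "m^2 * A2 \<le> N * \<mu>^2"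
  proof -
    have "m^2 * (A2 * N) \<le> m^2 * A1^2" using A2N by (intro mult_left_mono) auto
    also have "\<dots> = (\<mu> * N)^2" using muN by (simp add: power_mult_distrib)
    finally have "(m^2 * A2) * N \<le> (N * \<mu>^2) * N" by (simp add: power2_eq_square algebra_simps)
    then show ?thesis using Npos by (simp add: mult.commute)
  qed
  then have "m * A1 + m^2 * A2 - N * \<mu>^2 \<le> m * A1" by simp
  finally have var: "(\<Sum>s\<in>S. (X s - \<mu>)^2) \<le> \<mu> * N" using muN by simp
  have "(\<Sum>s\<in>S. Fv n s) \<le> (\<Sum>s\<in>S. 2 / \<mu> + 4 * (X s - \<mu>)^2 / \<mu>^2)"
    unfolding Fv_def X_def by (rule sum_mono) (rule pointwise_bd[OF mupos], simp)
  also have "\<dots> = N * (2 / \<mu>) + 4 / \<mu>^2 * (\<Sum>s\<in>S. (X s - \<mu>)^2)"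
    by (simp add: sum.distrib sum_distrib_left cS N_def)
  also have "\<dots> \<le> N * (2 / \<mu>) + 4 / \<mu>^2 * (\<mu> * N)"
    using var mupos by (intro add_left_mono mult_left_mono) auto
  also have "\<dots> = 6 * N / \<mu>" using mupos by (simp add: field_simps power2_eq_square)
  also have "\<dots> = 6 * N * N / (m * A1)" unfolding \<mu>_def using Npos by (simp add: field_simps)
  also have "\<dots> \<le> N * (12 * exp 2) / real n"
  proof -
    have r: "exp (-2) \<le> A1 / N" using pow_ratio_lower[OF n] A_ratio[of n] n unfolding A1_def N_def by simp
    then have "exp (-2) * N \<le> A1" using Npos by (simp add: field_simps)
    then have NA: "N \<le> exp 2 * A1" by (simp add: exp_minus field_simps)
    have nm: "real n \<le> 2 * m" unfolding m_def using n by (simp add: of_nat_diff)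
    have "6 * N * N * real n \<le> 6 * N * (exp 2 * A1) * (2 * m)"
      using NA nm Npos by (intro mult_mono) auto
    then have "6 * N * N * real n \<le> N * (12 * exp 2) * (m * A1)" by (simp add: algebra_simps)
    then show ?thesis using A1pos mge n by (simp add: field_simps)
  qed
  finally show ?thesis unfolding S_def N_def .
qed



lemma pair_pmf_of_set:
  assumes "finite A" "A \<noteq> {}" "finite B" "B \<noteq> {}"
  shows "pair_pmf (pmf_of_set A) (pmf_of_set B) = pmf_of_set (A \<times> B)"
proof (rule pmf_eqI)
  fix x :: "'a \<times> 'b"
  obtain a b where x: "x = (a, b)" by (cases x)
  show "pmf (pair_pmf (pmf_of_set A) (pmf_of_set B)) x = pmf (pmf_of_set (A \<times> B)) x"
    unfolding x pmf_pair using assms by (simp add: indicator_def card_cartesian_product)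
qed

lemma ranking_bound:
  assumes n: "2 \<le> n"
  shows "ranking_match_prob {1..n} {1..n} (hard_edges n) n 1 \<le> (12 * exp 2) / real n"
proof -
  define P where "P = {\<pi>. \<pi> permutes ({1..n}::nat set)}"
  define S where "S = PiE {..<n} (\<lambda>_. {1..n::nat})"
  define X where "X = {(\<pi>, s). 1 \<in> ranking_run {1..n} (hard_edges n) \<pi> s n}"
  define c where "c s = card {\<pi>. \<pi> permutes {1..n} \<and> 1 \<in> ranking_run {1..n} (hard_edges n) \<pi> s n}" for s
  have fP: "finite P" unfolding P_def by (rule finite_permutations) simp
  have neP: "P \<noteq> {}" unfolding P_def using permutes_id by blast
  have fS: "finite S" unfolding S_def by (simp add: finite_PiE)
  have cS: "card S = n^n" unfolding S_def by (simp add: card_PiE)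
  have "card S \<noteq> 0" using cS n by simp
  then have neS: "S \<noteq> {}" by auto
  have cPpos: "card P > 0" using fP neP by (simp add: card_gt_0_iff)
  have cSpos: "card S > 0" using fS neS by (simp add: card_gt_0_iff)
  have prob: "ranking_match_prob {1..n} {1..n} (hard_edges n) n 1 = real (card ((P \<times> S) \<inter> X)) / real (card (P \<times> S))"
    unfolding ranking_match_prob_def arrivals_def P_def[symmetric] S_def[symmetric] X_def[symmetric]
    unfolding pair_pmf_of_set[OF fP neP fS neS]
    by (rule measure_pmf_of_set) (use neP neS fP fS in auto)
  have "real (card ((P \<times> S) \<inter> X)) = (\<Sum>p\<in>P \<times> S. if p \<in> X then 1 else 0)"
    using fP fS by (simp add: sum_ind_card Int_def)
  also have "\<dots> = (\<Sum>\<pi>\<in>P. \<Sum>s\<in>S. if (\<pi>, s) \<in> X then 1 else 0)"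
    unfolding sum.cartesian_product by (rule sum.cong) auto
  also have "\<dots> = (\<Sum>s\<in>S. \<Sum>\<pi>\<in>P. if (\<pi>, s) \<in> X then 1 else 0)" by (rule sum.swap)
  also have "\<dots> = (\<Sum>s\<in>S. real (c s))"
    unfolding c_def X_def P_def using fP[unfolded P_def] by (simp add: sum_ind_card)
  also have "\<dots> \<le> (\<Sum>s\<in>S. real (card P) * (real (Kc n s) * Fv n s))"
  proof (rule sum_mono)
    fix s assume s: "s \<in> S"
    have "c s * (card (Dm n s) + 1) \<le> card P * Kc n s"
      using per_s[of s n] s n unfolding c_def P_def S_def by simp
    then have "real (c s * (card (Dm n s) + 1)) \<le> real (card P * Kc n s)"
      by (simp only: of_nat_le_iff)
    then have "real (c s) * (real (card (Dm n s)) + 1) \<le> real (card P) * real (Kc n s)"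
      by (simp add: algebra_simps)
    then show "real (c s) \<le> real (card P) * (real (Kc n s) * Fv n s)"
      unfolding Fv_def by (simp add: field_simps)
  qed
  also have "\<dots> = real (card P) * (\<Sum>s\<in>S. real (Kc n s) * Fv n s)" by (simp add: sum_distrib_left)
  also have "\<dots> \<le> real (card P) * (\<Sum>s\<in>S. Fv n s)"
    using Kc_sum[of n] n unfolding S_def by (intro mult_left_mono) auto
  also have "\<dots> \<le> real (card P) * (real (n^n) * (12 * exp 2) / real n)"
    using F_sum_bound[OF n] unfolding S_def by (intro mult_left_mono) auto
  finally have "real (card ((P \<times> S) \<inter> X)) \<le> real (card P) * real (card S) * ((12 * exp 2) / real n)"
    using cS by simp
  then show ?thesis unfolding prob using cPpos cSpos
    by (simp add: card_cartesian_product field_simps)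
qed



definition fo :: "nat \<Rightarrow> (nat \<Rightarrow> nat) \<Rightarrow> nat \<Rightarrow> nat option" where
  "fo n s t = (if t < n \<and> (\<forall>t'<t. s t' \<noteq> s t) then Some (s t) else None)"

lemma fo_valid:
  assumes s: "s \<in> PiE {..<n} (\<lambda>_. {1..n})"
  shows "valid_matching {1..n} (hard_edges n) n s (fo n s)"
proof -
  have A: "\<forall>t. n \<le> t \<longrightarrow> fo n s t = None" by (simp add: fo_def)
  have B: "\<forall>t<n. \<forall>i. fo n s t = Some i \<longrightarrow> i \<in> {1..n} \<and> (i, s t) \<in> hard_edges n"
  proof (intro allI impI)
    fix t i assume t: "t < n" and "fo n s t = Some i"
    then have i: "i = s t" by (simp add: fo_def split: if_splits)
    have "s t \<in> {1..n}" using PiE_mem[OF s, of t] t by simp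
    then show "i \<in> {1..n} \<and> (i, s t) \<in> hard_edges n" using i
      by (cases "s t = 1") (auto simp: hard_edges_iff)
  qed
  have C: "\<forall>t1 t2 i. fo n s t1 = Some i \<and> fo n s t2 = Some i \<longrightarrow> t1 = t2"
  proof (intro allI impI)
    fix t1 t2 i assume h: "fo n s t1 = Some i \<and> fo n s t2 = Some i"
    then have a: "s t1 = i" "s t2 = i" "\<forall>t'<t1. s t' \<noteq> s t1" "\<forall>t'<t2. s t' \<noteq> s t2"
      by (auto simp: fo_def split: if_splits)
    show "t1 = t2"
    proof (rule ccontr)
      assume "t1 \<noteq> t2"
      then consider "t1 < t2" | "t2 < t1" by linarith
      then show False using a by cases auto
    qed
  qed
  show ?thesis unfolding valid_matching_def using A B C by blast
qed

lemma fo_match_iff: "(\<exists>t<n. fo n s t = Some i) \<longleftrightarrow> (\<exists>t<n. s t = i)"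
proof
  assume "\<exists>t<n. fo n s t = Some i"
  then show "\<exists>t<n. s t = i" by (auto simp: fo_def split: if_splits)
next
  assume "\<exists>t<n. s t = i"
  then obtain t where t: "t < n" "s t = i" by blast
  define t0 where "t0 = (LEAST t. s t = i)"
  have st0: "s t0 = i" unfolding t0_def using t(2) by (rule LeastI)
  have "t0 \<le> t" unfolding t0_def using t(2) by (rule Least_le)
  moreover have "\<forall>t'<t0. s t' \<noteq> s t0" using st0 unfolding t0_def
    by (metis not_less_Least)
  ultimately have "fo n s t0 = Some i" using t st0 by (simp add: fo_def)
  then show "\<exists>t<n. fo n s t = Some i" using \<open>t0 \<le> t\<close> t(1) by (intro exI[of _ t0]) auto
qed

lemma fo_prob:
  assumes n: "1 \<le> n" and i: "i \<in> {1..n}"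
  shows "clair_match_prob {1..n} n (\<lambda>s. return_pmf (fo n s)) i = 1 - (1 - 1 / real n) ^ n"
proof -
  define S where "S = PiE {..<n} (\<lambda>_. {1..n::nat})"
  have fS: "finite S" unfolding S_def by (simp add: finite_PiE)
  have cS: "card S = n^n" unfolding S_def by (simp add: card_PiE)
  have "card S \<noteq> 0" using cS n by simp
  then have neS: "S \<noteq> {}" by auto
  have "clair_match_prob {1..n} n (\<lambda>s. return_pmf (fo n s)) i
      = measure_pmf.prob (pmf_of_set S) {s. \<exists>t<n. fo n s t = Some i}"
    unfolding clair_match_prob_def arrivals_def S_def[symmetric] map_pmf_def[symmetric]
    by (simp add: vimage_def)
  also have "\<dots> = real (card (S \<inter> {s. \<exists>t<n. fo n s t = Some i})) / real (card S)"
    by (rule measure_pmf_of_set) (use neS fS in auto)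
  also have "S \<inter> {s. \<exists>t<n. fo n s t = Some i} = S - {s\<in>S. \<forall>t<n. s t \<notin> {i}}"
    using fo_match_iff by auto
  also have "card (S - {s\<in>S. \<forall>t<n. s t \<notin> {i}}) = n^n - (n-1)^n"
  proof -
    have "card {s\<in>S. \<forall>t<n. s t \<notin> {i}} = (n-1)^n" unfolding S_def using avoid_card[of "{i}" n] i by simp
    then show ?thesis using cS fS by (subst card_Diff_subset) auto
  qed
  also have "real (n^n - (n-1)^n) / real (card S) = 1 - real ((n-1)^n) / real (n^n)"
  proof -
    have "(n-1)^n \<le> n^n" by (rule power_mono) auto
    then show ?thesis using cS \<open>card S \<noteq> 0\<close> by (simp add: of_nat_diff field_simps)
  qed
  also have "\<dots> = 1 - (1 - 1 / real n) ^ n" using A_ratio[OF n] by simp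
  finally show ?thesis .
qed

lemma clair_bound:
  assumes n: "2 \<le> n"
  shows "clair_opt {1..n} {1..n} (hard_edges n) n \<ge> 1 - 1 / exp 1"
proof -
  let ?P0 = "\<lambda>s. return_pmf (fo n s)"
  let ?g = "\<lambda>P. Min ((clair_match_prob {1..n} n P) ` {1..n})"
  have pol: "clairvoyant_policy {1..n} {1..n} (hard_edges n) n ?P0"
    unfolding clairvoyant_policy_def using fo_valid by auto
  have img: "(clair_match_prob {1..n} n ?P0) ` {1..n} = {1 - (1 - 1 / real n) ^ n}"
    using fo_prob[of n] n by force
  have g0: "?g ?P0 = 1 - (1 - 1 / real n) ^ n" unfolding img by simp
  have bdd: "bdd_above (?g ` {P. clairvoyant_policy {1..n} {1..n} (hard_edges n) n P})"
  proof (rule bdd_aboveI2)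
    fix P
    have "?g P \<le> clair_match_prob {1..n} n P 1" using n by (intro Min_le) auto
    also have "\<dots> \<le> 1" unfolding clair_match_prob_def by simp
    finally show "?g P \<le> 1" .
  qed
  have "?g ?P0 \<le> clair_opt {1..n} {1..n} (hard_edges n) n"
    unfolding clair_opt_def by (rule cSUP_upper) (use pol bdd in auto)
  moreover have "1 - 1 / exp 1 \<le> ?g ?P0"
    unfolding g0 using pow_ratio_upper[of n] n by (simp add: exp_minus inverse_eq_divide)
  ultimately show ?thesis by linarith
qed



theorem mainTheorem4:
  shows "(\<forall>n::nat. 2 \<le> n \<longrightarrow> clair_opt {1..n} {1..n} (hard_edges n) n \<ge> 1 - 1 / exp 1)
    \<and> (\<exists>C::real. \<forall>n::nat. 2 \<le> n \<longrightarrow>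
          ranking_match_prob {1..n} {1..n} (hard_edges n) n 1 \<le> C / real n)
    \<and> ((\<lambda>n. Min ((ranking_match_prob {1..n} {1..n} (hard_edges n) n) ` {1..n})
             / clair_opt {1..n} {1..n} (hard_edges n) n) \<longlonglongrightarrow> 0)"
proof (intro conjI)
  show "\<forall>n::nat. 2 \<le> n \<longrightarrow> clair_opt {1..n} {1..n} (hard_edges n) n \<ge> 1 - 1 / exp 1"
    using clair_bound by blast
  show "\<exists>C::real. \<forall>n::nat. 2 \<le> n \<longrightarrow>
          ranking_match_prob {1..n} {1..n} (hard_edges n) n 1 \<le> C / real n"
    using ranking_bound by blast
  define c0 :: real where "c0 = 1 - 1 / exp 1"
  have c0: "c0 > 0" unfolding c0_def by simp
  define K :: real where "K = 12 * exp 2 / c0"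
  let ?g = "\<lambda>n. Min ((ranking_match_prob {1..n} {1..n} (hard_edges n) n) ` {1..n})
             / clair_opt {1..n} {1..n} (hard_edges n) n"
  have bnds: "0 \<le> ?g n \<and> ?g n \<le> K / real n" if n: "2 \<le> n" for n
  proof -
    let ?M = "Min ((ranking_match_prob {1..n} {1..n} (hard_edges n) n) ` {1..n})"
    let ?Q = "clair_opt {1..n} {1..n} (hard_edges n) n"
    have Q: "?Q \<ge> c0" using clair_bound[OF n] unfolding c0_def .
    have Qpos: "?Q > 0" using Q c0 by linarith
    have "?M \<in> (ranking_match_prob {1..n} {1..n} (hard_edges n) n) ` {1..n}"
      using n by (intro Min_in) auto
    then have M0: "?M \<ge> 0" unfolding ranking_match_prob_def by auto
    have "?M \<le> ranking_match_prob {1..n} {1..n} (hard_edges n) n 1" using n by (intro Min_le) auto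
    also have "\<dots> \<le> 12 * exp 2 / real n" by (rule ranking_bound[OF n])
    finally have M1: "?M \<le> 12 * exp 2 / real n" .
    have "?M / ?Q \<le> ?M / c0" using M0 Q c0 by (intro divide_left_mono) auto
    also have "\<dots> \<le> (12 * exp 2 / real n) / c0" using M1 c0 by (intro divide_right_mono) auto
    also have "\<dots> = K / real n" unfolding K_def by simp
    finally show ?thesis using M0 Qpos by simp
  qed
  show "?g \<longlonglongrightarrow> 0"
  proof (rule tendsto_sandwich[where f = "\<lambda>_. 0" and h = "\<lambda>n. K / real n"])
    show "\<forall>\<^sub>F n in sequentially. 0 \<le> ?g n"
      unfolding eventually_sequentially using bnds by blast
    show "\<forall>\<^sub>F n in sequentially. ?g n \<le> K / real n"
      unfolding eventually_sequentially using bnds by blast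
    show "(\<lambda>_. 0::real) \<longlonglongrightarrow> 0" by simp
    show "(\<lambda>n. K / real n) \<longlonglongrightarrow> 0" by (rule lim_const_over_n)
  qed
qed

end
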